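(* Let $t,\ell,s\geq 1$ be integers and $\varepsilon,\delta\in(0,1)$. Let $\mathcal{H}$ be a $t$-uniform $(\varepsilon,\delta)$-superspread hypergraph and let $\mathfrak{B}$ be a collection of ordered $\ell$-tuples of distinct vertices of $\mathcal{H}$ such that for any $v_1,\dots,v_{\ell-1}\in V(\mathcal{H})$ there are at most $s$ vertices $v_\ell$ with $(v_1,\dots,v_\ell)\in\mathfrak{B}$. Then at most $(\varepsilon+t!\,s\,\delta)\,e(\mathcal{H})$ edges of $\mathcal{H}$ contain (all the vertices of) some tuple of $\mathfrak{B}$.
   Context: For $S\subseteq V(\mathcal{H})$, $\deg_{\mathcal{H}}(S)=|\{e\in E(\mathcal{H}): S\subseteq e\}|$. An edge $e$ is $\delta$-heavy if there exist $S\subseteq e$ and $v\in e\setminus S$ with $\deg_{\mathcal{H}}(S\cup\{v\})\geq\delta\deg_{\mathcal{H}}(S)$; otherwise it is $\delta$-light. $\mathcal{H}$ is $(\varepsilon,\delta)$-superspread if at most $\varepsilon\,e(\mathcal{H})$ of its edges are $\delta$-heavy. *)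

theory Defs
  imports Complex_Main
begin

definition deg :: "'a set set \<Rightarrow> 'a set \<Rightarrow> nat" where
  "deg E S = card {e \<in> E. S \<subseteq> e}"

definition heavy_edge :: "'a set set \<Rightarrow> real \<Rightarrow> 'a set \<Rightarrow> bool" where
  "heavy_edge E \<delta> e \<longleftrightarrow>
     (\<exists>S v. S \<subseteq> e \<and> v \<in> e - S \<and> real (deg E (S \<union> {v})) \<ge> \<delta> * real (deg E S))"

definition superspread :: "'a set set \<Rightarrow> real \<Rightarrow> real \<Rightarrow> bool" where
  "superspread E \<epsilon> \<delta> \<longleftrightarrow>
     real (card {e \<in> E. heavy_edge E \<delta> e}) \<le> \<epsilon> * real (card E)"

definition uniform_hypergraph :: "'a set \<Rightarrow> 'a set set \<Rightarrow> nat \<Rightarrow> bool" where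
  "uniform_hypergraph V E t \<longleftrightarrow> finite V \<and> (\<forall>e\<in>E. e \<subseteq> V \<and> card e = t)"

end

theory Submission
  imports Defs
begin

lemma card_distinct_lists_le_fact:
  assumes "finite A" "card A = t"
  shows "card {xs. length xs = k \<and> distinct xs \<and> set xs \<subseteq> A} \<le> fact t"
proof (cases "k \<le> card A")
  case True
  have "card {xs. length xs = k \<and> distinct xs \<and> set xs \<subseteq> A} = \<Prod>{card A - k + 1 .. card A}"
    by (rule card_lists_distinct_length_eq[OF assms(1) True])
  also have "\<dots> dvd \<Prod>{1..t}"
    using assms by (intro prod_dvd_prod_subset) auto
  then have "\<Prod>{card A - k + 1 .. card A} \<le> \<Prod>{1..t}"
    by (intro dvd_imp_le) auto
  finally show ?thesis by (simp add: fact_prod)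
next
  case False
  have E0: "{xs. length xs = k \<and> distinct xs \<and> set xs \<subseteq> A} = {}"
  proof (rule ccontr)
    assume "{xs. length xs = k \<and> distinct xs \<and> set xs \<subseteq> A} \<noteq> {}"
    then obtain xs where "length xs = k" "distinct xs" "set xs \<subseteq> A" by auto
    then have "k \<le> card A" using assms(1) by (metis card_mono distinct_card)
    then show False using False by simp
  qed
  show ?thesis unfolding E0 by simp
qed

theorem proposition2p7:
  fixes V :: "'a set" and E :: "'a set set" and B :: "'a list set"
    and t l s :: nat and \<epsilon> \<delta> :: real
  assumes "t \<ge> 1" "l \<ge> 1" "s \<ge> 1"
    and "0 < \<epsilon>" "\<epsilon> < 1" "0 < \<delta>" "\<delta> < 1"
    and "uniform_hypergraph V E t"
    and "superspread E \<epsilon> \<delta>"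
    and "\<forall>b\<in>B. length b = l \<and> distinct b \<and> set b \<subseteq> V"
    and "\<forall>xs. length xs = l - 1 \<and> set xs \<subseteq> V \<longrightarrow> card {v \<in> V. xs @ [v] \<in> B} \<le> s"
  shows "real (card {e \<in> E. \<exists>b\<in>B. set b \<subseteq> e}) \<le> (\<epsilon> + fact t * real s * \<delta>) * real (card E)"
proof -
  have finV: "finite V" and EV: "\<And>e. e \<in> E \<Longrightarrow> e \<subseteq> V \<and> card e = t"
    using assms(8) unfolding uniform_hypergraph_def by auto
  have finE: "finite E"
    by (rule finite_subset[of E "Pow V"]) (use EV finV in auto)
  define P where "P = {xs. length xs = l - 1 \<and> distinct xs \<and> set xs \<subseteq> V}"
  have finP: "finite P" unfolding P_def
    by (rule finite_subset[OF _ finite_lists_length_eq[OF finV, of "l-1"]]) auto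
  define F where "F = (\<lambda>xs. {v \<in> V. xs @ [v] \<in> B})"
  have finF: "\<And>xs. finite (F xs)" unfolding F_def using finV by auto
  have Bimg: "B = (\<lambda>(xs, v). xs @ [v]) ` Sigma P F"
  proof
    show "B \<subseteq> (\<lambda>(xs, v). xs @ [v]) ` Sigma P F"
    proof
      fix b assume b: "b \<in> B"
      then have lb: "length b = l" "distinct b" "set b \<subseteq> V" using assms(10) by auto
      then have "b \<noteq> []" using assms(2) by auto
      then have bb: "b = butlast b @ [last b]" by simp
      have "butlast b \<in> P" unfolding P_def using lb
        by (auto simp: distinct_butlast dest: in_set_butlastD)
      moreover have "last b \<in> F (butlast b)" unfolding F_def using lb b bb \<open>b \<noteq> []\<close>
        by auto
      ultimately show "b \<in> (\<lambda>(xs, v). xs @ [v]) ` Sigma P F"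
        using bb by (intro image_eqI[of _ _ "(butlast b, last b)"]) auto
    qed
  qed (auto simp: F_def)
  have injB: "inj_on (\<lambda>(xs, v). xs @ [v]) (Sigma P F)"
    by (rule inj_onI) auto
  have finB: "finite B" using Bimg finP finF by auto
  define L where "L = {e \<in> E. \<not> heavy_edge E \<delta> e}"
  define Hv where "Hv = {e \<in> E. heavy_edge E \<delta> e}"
  define T where "T = {e \<in> E. \<exists>b\<in>B. set b \<subseteq> e}"
  have "T \<subseteq> Hv \<union> (\<Union>b\<in>B. {e \<in> L. set b \<subseteq> e})"
    unfolding T_def Hv_def L_def by auto
  then have u1: "card T \<le> card (Hv \<union> (\<Union>b\<in>B. {e \<in> L. set b \<subseteq> e}))"
    by (intro card_mono) (use finE finB in \<open>auto simp: Hv_def L_def\<close>)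
  have u2: "card (Hv \<union> (\<Union>b\<in>B. {e \<in> L. set b \<subseteq> e})) \<le> card Hv + card (\<Union>b\<in>B. {e \<in> L. set b \<subseteq> e})"
    by (rule card_Un_le)
  have u3: "card (\<Union>b\<in>B. {e \<in> L. set b \<subseteq> e}) \<le> (\<Sum>b\<in>B. card {e \<in> L. set b \<subseteq> e})"
    by (rule card_UN_le[OF finB])
  have "card T \<le> card Hv + (\<Sum>b\<in>B. card {e \<in> L. set b \<subseteq> e})" using u1 u2 u3 by linarith
  then have "real (card T) \<le> real (card Hv + (\<Sum>b\<in>B. card {e \<in> L. set b \<subseteq> e}))"
    by (rule of_nat_mono)
  then have c1: "real (card T) \<le> real (card Hv) + (\<Sum>b\<in>B. real (card {e \<in> L. set b \<subseteq> e}))"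
    by simp
  have key: "real (card {e \<in> L. set (xs @ [v]) \<subseteq> e}) \<le> \<delta> * real (deg E (set xs))"
    if "xs \<in> P" "v \<in> F xs" for xs v
  proof (cases "{e \<in> L. set (xs @ [v]) \<subseteq> e} = {}")
    case True
    show ?thesis unfolding True card.empty of_nat_0 using assms(6) by simp
  next
    case False
    then obtain e where e: "e \<in> E" "\<not> heavy_edge E \<delta> e" "set (xs @ [v]) \<subseteq> e"
      unfolding L_def by auto
    have "xs @ [v] \<in> B" using that unfolding F_def by auto
    then have "distinct (xs @ [v])" using assms(10) by blast
    then have "v \<notin> set xs" by simp
    then have "\<not> (real (deg E (set xs \<union> {v})) \<ge> \<delta> * real (deg E (set xs)))"
      using e unfolding heavy_edge_def by auto
    moreover have "card {e \<in> L. set (xs @ [v]) \<subseteq> e} \<le> deg E (set xs \<union> {v})"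
      unfolding deg_def L_def by (rule card_mono) (use finE in auto)
    ultimately show ?thesis by linarith
  qed
  have "(\<Sum>b\<in>B. real (card {e \<in> L. set b \<subseteq> e}))
      = (\<Sum>(xs,v)\<in>Sigma P F. real (card {e \<in> L. set (xs @ [v]) \<subseteq> e}))"
    unfolding Bimg by (subst sum.reindex[OF injB]) (simp add: case_prod_unfold)
  also have "\<dots> = (\<Sum>xs\<in>P. \<Sum>v\<in>F xs. real (card {e \<in> L. set (xs @ [v]) \<subseteq> e}))"
    by (rule sum.Sigma[symmetric]) (use finP finF in auto)
  also have "\<dots> \<le> (\<Sum>xs\<in>P. \<Sum>v\<in>F xs. \<delta> * real (deg E (set xs)))"
    by (intro sum_mono key) auto
  also have "\<dots> = (\<Sum>xs\<in>P. real (card (F xs)) * (\<delta> * real (deg E (set xs))))"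
    by simp
  also have "\<dots> \<le> (\<Sum>xs\<in>P. real s * (\<delta> * real (deg E (set xs))))"
  proof (intro sum_mono mult_right_mono)
    fix xs assume "xs \<in> P"
    then show "real (card (F xs)) \<le> real s" using assms(11) unfolding P_def F_def by auto
  qed (use assms(6) in auto)
  also have "\<dots> = real s * \<delta> * real (\<Sum>xs\<in>P. deg E (set xs))"
    by (simp add: sum_distrib_left mult.assoc)
  finally have c2a: "(\<Sum>b\<in>B. real (card {e \<in> L. set b \<subseteq> e})) \<le> real s * \<delta> * real (\<Sum>xs\<in>P. deg E (set xs))" .
  have "(\<Sum>xs\<in>P. deg E (set xs)) = (\<Sum>xs\<in>P. \<Sum>e\<in>{e. e \<in> E \<and> set xs \<subseteq> e}. (1::nat))"
    by (simp add: deg_def)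
  also have "\<dots> = (\<Sum>e\<in>E. \<Sum>xs\<in>{xs. xs \<in> P \<and> set xs \<subseteq> e}. (1::nat))"
    by (rule sum.swap_restrict[OF finP finE])
  also have "\<dots> \<le> (\<Sum>e\<in>E. fact t)"
  proof (intro sum_mono)
    fix e assume e: "e \<in> E"
    have fe: "finite e" using EV[OF e] finV finite_subset by blast
    have "{xs. xs \<in> P \<and> set xs \<subseteq> e} = {xs. length xs = l - 1 \<and> distinct xs \<and> set xs \<subseteq> e}"
      using EV[OF e] unfolding P_def by auto
    then show "(\<Sum>xs\<in>{xs. xs \<in> P \<and> set xs \<subseteq> e}. (1::nat)) \<le> fact t"
      using card_distinct_lists_le_fact[OF fe, of t "l-1"] EV[OF e] by simp
  qed
  also have "\<dots> = fact t * card E" by simp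
  finally have c2b: "(\<Sum>xs\<in>P. deg E (set xs)) \<le> fact t * card E" .
  then have "real (\<Sum>xs\<in>P. deg E (set xs)) \<le> real (fact t * card E)"
    by (rule of_nat_mono)
  then have "real s * \<delta> * real (\<Sum>xs\<in>P. deg E (set xs)) \<le> real s * \<delta> * real (fact t * card E)"
    using assms(6) by (intro mult_left_mono) auto
  with c2a have c2: "(\<Sum>b\<in>B. real (card {e \<in> L. set b \<subseteq> e})) \<le> real s * \<delta> * real (fact t * card E)"
    by linarith
  have c3: "real (card Hv) \<le> \<epsilon> * real (card E)"
    using assms(9) unfolding superspread_def Hv_def by simp
  have "real (fact t * card E) = fact t * real (card E)" by simp
  then show ?thesis using c1 c2 c3 unfolding T_def
    by (simp add: algebra_simps)
qed

end
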